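(* Let $L>0$, $C\subset\mathbb{R}^n$ a nonempty closed convex set and $(f,h)\in\mathcal{B}_L(C)$. Let $\{x_k\}_{k\ge0}$ be generated by NoLips with constant step size $\lambda\in(0,1/L]$ from $x_0\in\operatorname{int}\operatorname{dom}h$. Then for every $k\ge2$, \[ \min_{1\le i\le k}D_h(x_{i-1},x_i)\le\frac{2D_h(x_*,x_0)}{k(k-1)}, \] where $x_*\in\operatorname{argmin}_C f\cap\operatorname{dom}h$.
   Context: $h$ is Legendre with zone $C$ if it is closed convex proper, $\overline{\operatorname{dom}h}=C$, continuously differentiable and strictly convex on $\operatorname{int}\operatorname{dom}h\ne\emptyset$, and $\|\nabla h(x_k)\|\to\infty$ for every sequence in $\operatorname{int}\operatorname{dom}h$ converging to a boundary point of $\operatorname{dom}h$. $D_h(x,y)=h(x)-h(y)-\langle\nabla h(y),x-y\rangle$. $(f,h)\in\mathcal{B}_L(C)$ means: $h$ is Legendre with zone $C$; $f:\mathbb{R}^n\to\mathbb{R}\cup\{+\infty\}$ is closed convex proper with $\operatorname{dom}h\subset\operatorname{dom}f$, continuously differentiable on $\operatorname{int}\operatorname{dom}h$; for every $\lambda>0$, $x\in\operatorname{int}\operatorname{dom}h$, $p\in\mathbb{R}^n$ the problem $\min_u\langle p,u-x\rangle+\frac1\lambda D_h(u,x)$ has a unique minimizer lying in $\operatorname{int}\operatorname{dom}h$; $\inf_C f>-\infty$; some minimizer of $f$ on $C$ lies in $\operatorname{dom}h$; and $Lh-f$ is convex on $C$. NoLips iterates $x_{k+1}=\operatorname{argmin}_{u\in\mathbb{R}^n}\langle\nabla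 f(x_k),u-x_k\rangle+\frac1\lambda D_h(u,x_k)$. *)

theory Defs
  imports "HOL-Analysis.Analysis"
begin

definition edom :: "('a \<Rightarrow> ereal) \<Rightarrow> 'a set" where
  "edom f = {x. f x < \<infinity>}"

definition epigraph_e :: "('a \<Rightarrow> ereal) \<Rightarrow> ('a \<times> real) set" where
  "epigraph_e f = {(x, t). f x \<le> ereal t}"

definition proper_fun :: "('a \<Rightarrow> ereal) \<Rightarrow> bool" where
  "proper_fun f \<longleftrightarrow> (\<forall>x. f x \<noteq> -\<infinity>) \<and> (\<exists>x. f x \<noteq> \<infinity>)"

definition closed_convex_proper :: "('a::real_normed_vector \<Rightarrow> ereal) \<Rightarrow> bool" where
  "closed_convex_proper f \<longleftrightarrow>
     closed (epigraph_e f) \<and> convex (epigraph_e f) \<and> proper_fun f"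

definition has_gradient :: "('a::euclidean_space \<Rightarrow> ereal) \<Rightarrow> 'a \<Rightarrow> 'a \<Rightarrow> bool" where
  "has_gradient f g x \<longleftrightarrow> ((\<lambda>y. real_of_ereal (f y)) has_derivative (\<lambda>v. g \<bullet> v)) (at x)"

definition grad :: "('a::euclidean_space \<Rightarrow> ereal) \<Rightarrow> 'a \<Rightarrow> 'a" where
  "grad f x = (SOME g. has_gradient f g x)"

definition C1_on :: "('a::euclidean_space \<Rightarrow> ereal) \<Rightarrow> 'a set \<Rightarrow> bool" where
  "C1_on f S \<longleftrightarrow> (\<forall>x\<in>S. f x \<noteq> \<infinity> \<and> f x \<noteq> -\<infinity> \<and> (\<exists>g. has_gradient f g x))
                 \<and> continuous_on S (grad f)"

definition strictly_convex_on :: "'a set \<Rightarrow> ('a::real_vector \<Rightarrow> real) \<Rightarrow> bool" where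
  "strictly_convex_on S f \<longleftrightarrow> (\<forall>x\<in>S. \<forall>y\<in>S. \<forall>t. x \<noteq> y \<longrightarrow> 0 < t \<longrightarrow> t < 1 \<longrightarrow>
      f ((1 - t) *\<^sub>R x + t *\<^sub>R y) < (1 - t) * f x + t * f y)"

definition legendre :: "('a::euclidean_space \<Rightarrow> ereal) \<Rightarrow> 'a set \<Rightarrow> bool" where
  "legendre h C \<longleftrightarrow>
     closed_convex_proper h \<and> closure (edom h) = C \<and>
     interior (edom h) \<noteq> {} \<and>
     C1_on h (interior (edom h)) \<and>
     strictly_convex_on (interior (edom h)) (\<lambda>x. real_of_ereal (h x)) \<and>
     (\<forall>s b. (\<forall>j. s j \<in> interior (edom h)) \<longrightarrow> s \<longlonglongrightarrow> b \<longrightarrow> b \<in> frontier (edom h) \<longrightarrow>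
        filterlim (\<lambda>j. norm (grad h (s j))) at_top sequentially)"

definition bregman :: "('a::euclidean_space \<Rightarrow> ereal) \<Rightarrow> 'a \<Rightarrow> 'a \<Rightarrow> ereal" where
  "bregman h x y = h x - h y - ereal (grad h y \<bullet> (x - y))"

definition nolips_obj :: "('a::euclidean_space \<Rightarrow> ereal) \<Rightarrow> real \<Rightarrow> 'a \<Rightarrow> 'a \<Rightarrow> 'a \<Rightarrow> ereal" where
  "nolips_obj h lam p x u = ereal (p \<bullet> (u - x)) + ereal (1 / lam) * bregman h u x"

definition is_minimizer :: "('a \<Rightarrow> ereal) \<Rightarrow> 'a \<Rightarrow> bool" where
  "is_minimizer F u \<longleftrightarrow> (\<forall>v. F u \<le> F v)"

definition class_B :: "real \<Rightarrow> 'a set \<Rightarrow> ('a::euclidean_space \<Rightarrow> ereal) \<Rightarrow> ('a \<Rightarrow> ereal) \<Rightarrow> bool" where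
  "class_B L C f h \<longleftrightarrow>
     legendre h C \<and>
     closed_convex_proper f \<and> edom h \<subseteq> edom f \<and>
     C1_on f (interior (edom h)) \<and>
     (\<forall>lam>0. \<forall>x\<in>interior (edom h). \<forall>p.
        (\<exists>!u. is_minimizer (nolips_obj h lam p x) u) \<and>
        (\<forall>u. is_minimizer (nolips_obj h lam p x) u \<longrightarrow> u \<in> interior (edom h))) \<and>
     (INF x\<in>C. f x) > -\<infinity> \<and>
     (\<exists>x\<in>C \<inter> edom h. \<forall>y\<in>C. f x \<le> f y) \<and>
     convex_on (edom h) (\<lambda>x. L * real_of_ereal (h x) - real_of_ereal (f x))"

end

theory Submission
  imports Defs
begin

lemma tangent_ineq:
  fixes F :: "'a::euclidean_space \<Rightarrow> real"
  assumes der: "(F has_derivative (\<lambda>v. g \<bullet> v)) (at x)"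
    and cv: "\<And>t. 0 < t \<Longrightarrow> t < 1 \<Longrightarrow> F (x + t *\<^sub>R (u - x)) \<le> (1 - t) * F x + t * F u"
  shows "F x + g \<bullet> (u - x) \<le> F u"
proof -
  define d where "d = u - x"
  have "((\<lambda>t. x + t *\<^sub>R d) has_derivative (\<lambda>s. s *\<^sub>R d)) (at 0)"
    by (auto intro!: derivative_eq_intros)
  moreover have "(F has_derivative (\<lambda>v. g \<bullet> v)) (at (x + 0 *\<^sub>R d))" using der by simp
  ultimately have "((\<lambda>t. F (x + t *\<^sub>R d)) has_derivative (\<lambda>s. g \<bullet> (s *\<^sub>R d))) (at 0)"
    by (rule has_derivative_compose)
  note a = this
  have "((\<lambda>t. F (x + t *\<^sub>R d)) has_field_derivative (g \<bullet> d)) (at 0)"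
  proof -
    have "(\<lambda>s. g \<bullet> (s *\<^sub>R d)) = (*) (g \<bullet> d)" by (auto simp: fun_eq_iff)
    with a show ?thesis unfolding has_field_derivative_def by simp
  qed
  then have lim: "((\<lambda>t. (F (x + t *\<^sub>R d) - F x) / t) \<longlongrightarrow> g \<bullet> d) (at_right 0)"
    unfolding has_field_derivative_iff by (auto intro: tendsto_mono[OF at_le])
  have ev: "\<forall>\<^sub>F t in at_right 0. (F (x + t *\<^sub>R d) - F x) / t \<le> F u - F x"
    unfolding eventually_at_right_field
  proof (intro exI[of _ 1] conjI allI impI)
    fix t :: real assume tt: "0 < t" "t < 1"
    then have "F (x + t *\<^sub>R d) \<le> (1 - t) * F x + t * F u" using cv d_def by auto
    then show "(F (x + t *\<^sub>R d) - F x) / t \<le> F u - F x" using tt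
      by (simp add: divide_simps algebra_simps)
  qed simp
  have "g \<bullet> d \<le> F u - F x"
    by (rule tendsto_le[OF _ tendsto_const lim ev]) simp
  then show ?thesis using d_def by simp
qed

lemma edom_finite:
  assumes "closed_convex_proper F" "a \<in> edom F"
  shows "F a = ereal (real_of_ereal (F a))"
proof -
  have "F a \<noteq> -\<infinity>" using assms(1) unfolding closed_convex_proper_def proper_fun_def by blast
  moreover have "F a \<noteq> \<infinity>" using assms(2) unfolding edom_def by auto
  ultimately show ?thesis by (cases "F a") auto
qed

lemma conv_epi:
  fixes F :: "'a::euclidean_space \<Rightarrow> ereal"
  assumes "closed_convex_proper F" "a \<in> edom F" "b \<in> edom F" "0 \<le> t" "t \<le> 1"
  shows "F ((1 - t) *\<^sub>R a + t *\<^sub>R b) \<le> ereal ((1 - t) * real_of_ereal (F a) + t * real_of_ereal (F b))"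
proof -
  have fa: "F a = ereal (real_of_ereal (F a))" "F b = ereal (real_of_ereal (F b))"
    using assms edom_finite by blast+
  have "(a, real_of_ereal (F a)) \<in> epigraph_e F" "(b, real_of_ereal (F b)) \<in> epigraph_e F"
    unfolding epigraph_e_def using fa by auto
  moreover have "convex (epigraph_e F)" using assms(1) by (simp add: closed_convex_proper_def)
  ultimately have "(1 - t) *\<^sub>R (a, real_of_ereal (F a)) + t *\<^sub>R (b, real_of_ereal (F b)) \<in> epigraph_e F"
    using assms(4,5) by (intro convexD) auto
  then show ?thesis by (simp add: epigraph_e_def)
qed


lemma conv_real:
  fixes F :: "'a::euclidean_space \<Rightarrow> ereal"
  assumes "closed_convex_proper F" "a \<in> edom F" "b \<in> edom F" "0 \<le> t" "t \<le> 1"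
  shows "(1 - t) *\<^sub>R a + t *\<^sub>R b \<in> edom F \<and>
    real_of_ereal (F ((1 - t) *\<^sub>R a + t *\<^sub>R b)) \<le> (1 - t) * real_of_ereal (F a) + t * real_of_ereal (F b)"
proof -
  let ?p = "(1 - t) *\<^sub>R a + t *\<^sub>R b"
  have le: "F ?p \<le> ereal ((1 - t) * real_of_ereal (F a) + t * real_of_ereal (F b))"
    using conv_epi[OF assms] .
  then have "?p \<in> edom F" unfolding edom_def using le_less_trans by fastforce
  moreover have "F ?p = ereal (real_of_ereal (F ?p))" using edom_finite[OF assms(1) calculation] .
  ultimately show ?thesis using le by (metis ereal_less_eq(3))
qed

lemma sum_nat_real: "(\<Sum>j=1..m. real j) = real m * (real m + 1) / 2"
  by (induction m) (auto simp: field_simps)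

lemma grad_ok:
  assumes "C1_on F S" "z \<in> S"
  shows "((\<lambda>y. real_of_ereal (F y)) has_derivative (\<lambda>v. grad F z \<bullet> v)) (at z)"
proof -
  have "\<exists>g. has_gradient F g z" using assms unfolding C1_on_def by blast
  then have "has_gradient F (grad F z) z" unfolding grad_def by (rule someI_ex)
  then show ?thesis unfolding has_gradient_def .
qed

lemma phi_deriv:
  fixes rh :: "'a::euclidean_space \<Rightarrow> real"
  assumes d: "(rh has_derivative (\<lambda>v. gy \<bullet> v)) (at y)"
  shows "((\<lambda>u. p \<bullet> (u - z) + c * (rh u - rh z - gz \<bullet> (u - z))) has_derivative (\<lambda>v. (p + c *\<^sub>R (gy - gz)) \<bullet> v)) (at y)"
  apply (rule has_derivative_eq_rhs)
   apply (auto intro!: derivative_eq_intros d)[1]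
  apply (simp add: fun_eq_iff algebra_simps inner_add_left inner_diff_left)
  done
lemma G_deriv:
  fixes rh :: "'a::euclidean_space \<Rightarrow> real"
  assumes d: "(rh has_derivative (\<lambda>v. gy \<bullet> v)) (at y)" and e: "(rf has_derivative (\<lambda>v. gf \<bullet> v)) (at y)"
  shows "((\<lambda>u. L * rh u - rf u) has_derivative (\<lambda>v. (L *\<^sub>R gy - gf) \<bullet> v)) (at y)"
  apply (rule has_derivative_eq_rhs)
   apply (auto intro!: derivative_eq_intros d e)[1]
  apply (simp add: fun_eq_iff algebra_simps inner_add_left inner_diff_left)
  done

theorem proposition4p6:
  fixes f h :: "'a::euclidean_space \<Rightarrow> ereal"
    and C :: "'a set" and L lam :: real and x :: "nat \<Rightarrow> 'a"
  assumes "L > 0"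
    and "C \<noteq> {}" and "closed C" and "convex C"
    and "class_B L C f h"
    and "0 < lam" and "lam \<le> 1 / L"
    and "x 0 \<in> interior (edom h)"
    and "\<And>k. is_minimizer (nolips_obj h lam (grad f (x k)) (x k)) (x (Suc k))"
  shows "\<forall>xs \<in> C \<inter> edom h. (\<forall>y\<in>C. f xs \<le> f y) \<longrightarrow>
           (\<forall>k\<ge>2. (MIN i\<in>{1..k}. bregman h (x (i - 1)) (x i))
                   \<le> ereal 2 * bregman h xs (x 0) / ereal (real k * (real k - 1)))"
proof (intro ballI impI allI)
  fix xs :: 'a and k :: nat
  assume xsC: "xs \<in> C \<inter> edom h" and xsmin: "\<forall>y\<in>C. f xs \<le> f y" and k2: "2 \<le> k"
  define S where "S = interior (edom h)"
  define rh where "rh = (\<lambda>z. real_of_ereal (h z))"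
  define rf where "rf = (\<lambda>z. real_of_ereal (f z))"
  define D where "D = (\<lambda>u z. rh u - rh z - grad h z \<bullet> (u - z))"
  have leg: "legendre h C" and ccpf: "closed_convex_proper f" and domsub: "edom h \<subseteq> edom f"
    and C1f: "C1_on f S"
    and uniq: "\<forall>lam>0. \<forall>x\<in>S. \<forall>p.
        (\<exists>!u. is_minimizer (nolips_obj h lam p x) u) \<and>
        (\<forall>u. is_minimizer (nolips_obj h lam p x) u \<longrightarrow> u \<in> S)"
    and convLf: "convex_on (edom h) (\<lambda>x. L * real_of_ereal (h x) - real_of_ereal (f x))"
    using assms(5) unfolding class_B_def S_def by blast+
  have ccph: "closed_convex_proper h" and clos: "closure (edom h) = C" and C1h: "C1_on h S"
    using leg unfolding legendre_def S_def by blast+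
  have Sdom: "S \<subseteq> edom h" unfolding S_def by (rule interior_subset)
  have SC: "S \<subseteq> C" using Sdom clos closure_subset by blast
  have openS: "open S" unfolding S_def by simp
  have xS: "x j \<in> S" for j
  proof (induction j)
    case 0 then show ?case using assms(8) S_def by simp
  next
    case (Suc j)
    have "\<forall>u. is_minimizer (nolips_obj h lam (grad f (x j)) (x j)) u \<longrightarrow> u \<in> S"
      using uniq[rule_format, OF assms(6) Suc.IH, of "grad f (x j)"] by (rule conjunct2)
    then show ?case using assms(9)[of j] by blast
  qed
  have ghd: "(rh has_derivative (\<lambda>v. grad h z \<bullet> v)) (at z)" if "z \<in> S" for z
    unfolding rh_def by (rule grad_ok[OF C1h that])
  have gfd: "(rf has_derivative (\<lambda>v. grad f z \<bullet> v)) (at z)" if "z \<in> S" for z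
    unfolding rf_def by (rule grad_ok[OF C1f that])
  have hfin: "h u = ereal (rh u)" if "u \<in> edom h" for u
    using edom_finite[OF ccph that] rh_def by simp
  have ffin: "f u = ereal (rf u)" if "u \<in> edom h" for u
    using edom_finite[OF ccpf] that domsub rf_def by auto
  have bre: "bregman h u z = ereal (D u z)" if "u \<in> edom h" "z \<in> S" for u z
    using that Sdom hfin unfolding bregman_def D_def by auto
  have segeq: "z + t *\<^sub>R (u - z) = (1 - t) *\<^sub>R z + t *\<^sub>R u" for z u :: 'a and t :: real
    by (simp add: algebra_simps)
  have Dnn: "0 \<le> D u z" if "u \<in> edom h" "z \<in> S" for u z
  proof -
    have "rh z + grad h z \<bullet> (u - z) \<le> rh u"
    proof (rule tangent_ineq[OF ghd[OF that(2)]])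
      fix t :: real assume "0 < t" "t < 1"
      then have t0: "0 \<le> t" and t1: "t \<le> 1" by auto
      have zd: "z \<in> edom h" using that(2) Sdom by blast
      have "real_of_ereal (h ((1 - t) *\<^sub>R z + t *\<^sub>R u)) \<le> (1 - t) * real_of_ereal (h z) + t * real_of_ereal (h u)"
        by (rule conjunct2[OF conv_real[OF ccph zd that(1) t0 t1]])
      then show "rh (z + t *\<^sub>R (u - z)) \<le> (1 - t) * rh z + t * rh u"
        unfolding segeq rh_def .
    qed
    then show ?thesis unfolding D_def by simp
  qed
  have lamL: "lam * L \<le> 1" using assms(1,7) by (simp add: field_simps)
  have opt: "grad h (x (Suc j)) = grad h (x j) - lam *\<^sub>R grad f (x j)" for j
  proof -
    define y where "y = x (Suc j)"
    define z where "z = x j"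
    define p where "p = grad f (x j)"
    define phi where "phi = (\<lambda>u. p \<bullet> (u - z) + (1 / lam) * D u z)"
    define w where "w = p + (1 / lam) *\<^sub>R (grad h y - grad h z)"
    have yS: "y \<in> S" and zS: "z \<in> S" using xS y_def z_def by auto
    have phieq: "nolips_obj h lam p z u = ereal (phi u)" if "u \<in> S" for u
      using bre[of u z] that zS Sdom unfolding nolips_obj_def phi_def by auto
    have minz: "\<forall>v. nolips_obj h lam p z y \<le> nolips_obj h lam p z v"
      using assms(9)[of j] unfolding is_minimizer_def y_def z_def p_def .
    have "\<forall>u\<in>S. phi y \<le> phi u"
    proof
      fix u assume uS: "u \<in> S"
      have "ereal (phi y) \<le> ereal (phi u)" using minz phieq[OF uS] phieq[OF yS] by metis
      then show "phi y \<le> phi u" by simp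
    qed
    moreover have "(phi has_derivative (\<lambda>v. w \<bullet> v)) (at y)"
      unfolding phi_def D_def w_def by (rule phi_deriv[OF ghd[OF yS]])
    ultimately have "(\<lambda>v. w \<bullet> v) = (\<lambda>v. 0)"
      using differential_zero_maxmin[OF yS openS] by blast
    then have "w \<bullet> w = 0" by metis
    then have "w = 0" by simp
    then have "lam *\<^sub>R w = 0" by simp
    moreover have "lam *\<^sub>R w = lam *\<^sub>R p + (grad h y - grad h z)"
      using assms(6) unfolding w_def by (simp add: algebra_simps)
    ultimately show ?thesis unfolding y_def z_def p_def by (simp add: algebra_simps)
  qed
  have descent: "rf (x (Suc j)) \<le> rf (x j) + grad f (x j) \<bullet> (x (Suc j) - x j) + L * D (x (Suc j)) (x j)" for j
  proof -
    define G where "G = (\<lambda>x. L * rh x - rf x)"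
    have "(G has_derivative (\<lambda>v. (L *\<^sub>R grad h (x j) - grad f (x j)) \<bullet> v)) (at (x j))"
      unfolding G_def by (rule G_deriv[OF ghd[OF xS] gfd[OF xS]])
    then have "G (x j) + (L *\<^sub>R grad h (x j) - grad f (x j)) \<bullet> (x (Suc j) - x j) \<le> G (x (Suc j))"
    proof (rule tangent_ineq)
      fix t :: real assume "0 < t" "t < 1"
      then show "G (x j + t *\<^sub>R (x (Suc j) - x j)) \<le> (1 - t) * G (x j) + t * G (x (Suc j))"
        unfolding segeq G_def rh_def rf_def using convex_onD[OF convLf, of t "x j" "x (Suc j)"] xS[of j] xS[of "Suc j"] Sdom by auto
    qed
    then show ?thesis unfolding G_def D_def rh_def rf_def by (simp add: algebra_simps inner_diff_left)
  qed
  have fconv: "rf (x j) + grad f (x j) \<bullet> (u - x j) \<le> rf u" if "u \<in> edom h" for j u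
  proof (rule tangent_ineq[OF gfd[OF xS]])
    fix t :: real assume "0 < t" "t < 1"
    then show "rf (x j + t *\<^sub>R (u - x j)) \<le> (1 - t) * rf (x j) + t * rf u"
      using conv_real[OF ccpf _ _, of "x j" u t] that xS[of j] Sdom domsub unfolding segeq rf_def by auto
  qed
  have key: "lam * (rf (x (Suc j)) - rf u) \<le> D u (x j) - D u (x (Suc j))" if "u \<in> edom h" for j u
  proof -
    have three: "D u (x j) - D u (x (Suc j)) - D (x (Suc j)) (x j) = lam * (grad f (x j) \<bullet> (x (Suc j) - u))"
      unfolding D_def opt by (simp add: algebra_simps inner_diff_left inner_diff_right)
    have d0: "0 \<le> D (x (Suc j)) (x j)" using Dnn xS Sdom by blast
    have m1: "lam * L * D (x (Suc j)) (x j) \<le> D (x (Suc j)) (x j)"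
      using mult_right_mono[OF lamL d0] by simp
    have q: "rf (x (Suc j)) - rf u \<le> grad f (x j) \<bullet> (x (Suc j) - u) + L * D (x (Suc j)) (x j)"
      using descent[of j] fconv[OF that, of j] by (simp add: inner_diff_right)
    have "lam * (rf (x (Suc j)) - rf u) \<le> lam * (grad f (x j) \<bullet> (x (Suc j) - u) + L * D (x (Suc j)) (x j))"
      using assms(6) q by (intro mult_left_mono) auto
    also have "\<dots> = lam * (grad f (x j) \<bullet> (x (Suc j) - u)) + lam * L * D (x (Suc j)) (x j)"
      by (simp add: algebra_simps)
    finally have m2: "lam * (rf (x (Suc j)) - rf u) \<le> lam * (grad f (x j) \<bullet> (x (Suc j) - u)) + lam * L * D (x (Suc j)) (x j)" .
    show ?thesis using three m1 m2 by linarith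
  qed
  define a where "a = (\<lambda>j. D (x j) (x (Suc j)))"
  define e where "e = (\<lambda>j. rf (x j) - rf xs)"
  define E where "E = (\<lambda>j. D xs (x j))"
  have a_le: "a j \<le> lam * (e j - e (Suc j))" for j
    using key[of "x j" j] xS Sdom unfolding a_def e_def by (auto simp: D_def algebra_simps)
  have E_step: "lam * e (Suc j) \<le> E j - E (Suc j)" for j
    using key[of xs j] xsC unfolding e_def E_def by (auto simp: algebra_simps)
  have e_nn: "0 \<le> e j" for j
  proof -
    have "f xs \<le> f (x j)" using xsmin xS SC by blast
    then show ?thesis using ffin xsC xS Sdom unfolding e_def by (metis IntE ereal_less_eq(3) subsetD diff_ge_0_iff_ge)
  qed
  have E_nn: "0 \<le> E j" for j using Dnn xsC xS unfolding E_def by blast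
  have inv: "(\<Sum>j=1..m. real j * a j) + lam * real m * e (Suc m) + E m \<le> E 0" for m
  proof (induction m)
    case 0 then show ?case by simp
  next
    case (Suc m)
    have s: "(\<Sum>j=1..Suc m. real j * a j) = (\<Sum>j=1..m. real j * a j) + real (Suc m) * a (Suc m)"
      by simp
    have "real (Suc m) * a (Suc m) \<le> real (Suc m) * (lam * (e (Suc m) - e (Suc (Suc m))))"
      using a_le by (intro mult_left_mono) auto
    then have "real (Suc m) * a (Suc m) + lam * real (Suc m) * e (Suc (Suc m))
       \<le> lam * real m * e (Suc m) + lam * e (Suc m)"
      by (simp add: algebra_simps)
    then show ?case using Suc.IH E_step[of m] s by linarith
  qed
  define m where "m = k - 1"
  have m1: "1 \<le> m" using k2 m_def by simp
  have km: "real k = real m + 1" using k2 m_def by simp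
  have sumle: "(\<Sum>j=1..m. real j * a j) \<le> E 0"
  proof -
    have "0 \<le> lam * real m * e (Suc m)" using assms(6) e_nn by simp
    then show ?thesis using inv[of m] E_nn[of m] by linarith
  qed
  define c where "c = 2 * E 0 / (real k * (real k - 1))"
  have kpos: "0 < real k * (real k - 1)" using k2 by simp
  have "\<exists>j\<in>{1..m}. a j \<le> c"
  proof (rule ccontr)
    assume "\<not> (\<exists>j\<in>{1..m}. a j \<le> c)"
    then have gt: "c < a j" if "j \<in> {1..m}" for j using that by (meson not_le)
    have "(\<Sum>j=1..m. real j * c) < (\<Sum>j=1..m. real j * a j)"
      using m1 by (intro sum_strict_mono) (auto intro!: mult_strict_left_mono gt)
    moreover have "(\<Sum>j=1..m. real j * c) = E 0"
    proof -
      have "(\<Sum>j=1..m. real j * c) = (\<Sum>j=1..m. real j) * c" by (simp add: sum_distrib_right)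
      also have "\<dots> = E 0" unfolding sum_nat_real c_def km using kpos km
        by (simp add: field_simps)
      finally show ?thesis .
    qed
    ultimately show False using sumle by linarith
  qed
  then obtain j where j: "j \<in> {1..m}" "a j \<le> c" by blast
  have fin: "finite ((\<lambda>i. bregman h (x (i - 1)) (x i)) ` {1..k})" by simp
  have mem: "bregman h (x j) (x (Suc j)) \<in> (\<lambda>i. bregman h (x (i - 1)) (x i)) ` {1..k}"
    using j(1) m_def k2 by (intro image_eqI[of _ _ "Suc j"]) auto
  have "(MIN i\<in>{1..k}. bregman h (x (i - 1)) (x i)) \<le> bregman h (x j) (x (Suc j))"
    using Min_le[OF fin mem] .
  also have "\<dots> = ereal (a j)" using bre xS Sdom unfolding a_def by blast
  also have "\<dots> \<le> ereal c" using j by simp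
  also have "\<dots> = ereal 2 * bregman h xs (x 0) / ereal (real k * (real k - 1))"
    using bre[of xs "x 0"] xsC xS kpos k2 unfolding c_def E_def by simp
  finally show "(MIN i\<in>{1..k}. bregman h (x (i - 1)) (x i))
                   \<le> ereal 2 * bregman h xs (x 0) / ereal (real k * (real k - 1))" .
qed

end
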